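(* Let $(X,d)$ be a metric space (not necessarily complete) with $|X|\geqslant 3$, and let $T\colon X\to X$ be continuous. Suppose: (i) $T$ has no periodic points of prime period $2$, i.e. $T(T(x))\neq x$ for every $x\in X$ with $Tx\neq x$; (ii) there is an everywhere dense subset $M\subseteq X$ and constants $\alpha,\lambda\geqslant 0$ with $2\alpha+\frac{3\lambda}{2}<1$ such that $$d(Tx,Ty)+d(Ty,Tz)+d(Tx,Tz)\leqslant \alpha\big(d(x,y)+d(y,z)+d(z,x)\big)+\lambda\big(d(x,Tx)+d(y,Ty)+d(z,Tz)\big)$$ for all pairwise distinct $x,y,z\in M$; (iii) there exists $x_0\in X$ such that the sequence of iterates $x_n=Tx_{n-1}$, $n=1,2,\dots$, has a subsequence $(x_{n_k})$ converging to a point $x^*\in X$. Then $x^*$ is a fixed point of $T$, and $T$ has at most two fixed points. *)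

theory Defs
  imports "HOL-Analysis.Analysis"
begin

end

theory Submission
  imports Defs
begin

lemma ext_ineq:
  fixes T :: "'a::metric_space \<Rightarrow> 'a"
  assumes cont: "continuous_on UNIV T"
    and dense: "closure M = UNIV"
    and contr: "\<And>x y z. \<lbrakk>x \<in> M; y \<in> M; z \<in> M; x \<noteq> y; y \<noteq> z; x \<noteq> z\<rbrakk> \<Longrightarrow>
        dist (T x) (T y) + dist (T y) (T z) + dist (T x) (T z)
        \<le> alpha * (dist x y + dist y z + dist z x) + lam * (dist x (T x) + dist y (T y) + dist z (T z))"
    and d: "x \<noteq> y" "y \<noteq> z" "x \<noteq> z"
  shows "dist (T x) (T y) + dist (T y) (T z) + dist (T x) (T z)
        \<le> alpha * (dist x y + dist y z + dist z x) + lam * (dist x (T x) + dist y (T y) + dist z (T z))"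
proof -
  have "\<And>w. w \<in> closure M" using dense by auto
  then have ex: "\<And>w. \<exists>s. (\<forall>n. s n \<in> M) \<and> s \<longlonglongrightarrow> w"
    by (meson closure_sequential)
  obtain a where a: "\<And>n. a n \<in> M" "a \<longlonglongrightarrow> x" using ex by blast
  obtain b where b: "\<And>n. b n \<in> M" "b \<longlonglongrightarrow> y" using ex by blast
  obtain c where c: "\<And>n. c n \<in> M" "c \<longlonglongrightarrow> z" using ex by blast
  have ic: "\<And>w. isCont T w" using cont by (simp add: continuous_on_eq_continuous_at)
  have Ta: "(\<lambda>n. T (a n)) \<longlonglongrightarrow> T x" using a(2) ic isCont_tendsto_compose by blast
  have Tb: "(\<lambda>n. T (b n)) \<longlonglongrightarrow> T y" using b(2) ic isCont_tendsto_compose by blast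
  have Tc: "(\<lambda>n. T (c n)) \<longlonglongrightarrow> T z" using c(2) ic isCont_tendsto_compose by blast
  have e1: "eventually (\<lambda>n. dist (a n) (b n) > 0) sequentially"
    using order_tendstoD(1)[OF tendsto_dist[OF a(2) b(2)], of 0] d by simp
  have e2: "eventually (\<lambda>n. dist (b n) (c n) > 0) sequentially"
    using order_tendstoD(1)[OF tendsto_dist[OF b(2) c(2)], of 0] d by simp
  have e3: "eventually (\<lambda>n. dist (a n) (c n) > 0) sequentially"
    using order_tendstoD(1)[OF tendsto_dist[OF a(2) c(2)], of 0] d by simp
  have ev: "eventually (\<lambda>n. dist (T (a n)) (T (b n)) + dist (T (b n)) (T (c n)) + dist (T (a n)) (T (c n))
        \<le> alpha * (dist (a n) (b n) + dist (b n) (c n) + dist (c n) (a n)) + lam * (dist (a n) (T (a n)) + dist (b n) (T (b n)) + dist (c n) (T (c n)))) sequentially"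
    using e1 e2 e3
  proof eventually_elim
    case (elim n)
    then show ?case using contr[OF a(1) b(1) c(1)] by simp
  qed
  have L: "(\<lambda>n. dist (T (a n)) (T (b n)) + dist (T (b n)) (T (c n)) + dist (T (a n)) (T (c n)))
     \<longlonglongrightarrow> dist (T x) (T y) + dist (T y) (T z) + dist (T x) (T z)"
    by (intro tendsto_add tendsto_dist Ta Tb Tc)
  have R: "(\<lambda>n. alpha * (dist (a n) (b n) + dist (b n) (c n) + dist (c n) (a n)) + lam * (dist (a n) (T (a n)) + dist (b n) (T (b n)) + dist (c n) (T (c n))))
     \<longlonglongrightarrow> alpha * (dist x y + dist y z + dist z x) + lam * (dist x (T x) + dist y (T y) + dist z (T z))"
    by (intro tendsto_add tendsto_mult tendsto_const tendsto_dist Ta Tb Tc a(2) b(2) c(2))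
  show ?thesis
    by (rule tendsto_le[OF _ R L ev]) simp
qed

theorem theorem5p2:
  fixes T :: "'a::metric_space \<Rightarrow> 'a"
    and M :: "'a set"
    and alpha lam :: real
    and x0 xs :: 'a
    and r :: "nat \<Rightarrow> nat"
  assumes card3: "\<exists>a b c :: 'a. a \<noteq> b \<and> b \<noteq> c \<and> a \<noteq> c"
    and cont: "continuous_on UNIV T"
    and no_per2: "\<And>x. T x \<noteq> x \<Longrightarrow> T (T x) \<noteq> x"
    and dense: "closure M = UNIV"
    and alpha_nonneg: "alpha \<ge> 0" and lambda_nonneg: "lam \<ge> 0"
    and coef: "2 * alpha + 3 * lam / 2 < 1"
    and contr: "\<And>x y z. \<lbrakk>x \<in> M; y \<in> M; z \<in> M; x \<noteq> y; y \<noteq> z; x \<noteq> z\<rbrakk> \<Longrightarrow>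
        dist (T x) (T y) + dist (T y) (T z) + dist (T x) (T z)
        \<le> alpha * (dist x y + dist y z + dist z x) + lam * (dist x (T x) + dist y (T y) + dist z (T z))"
    and subseq: "strict_mono r"
    and conv: "(\<lambda>k. (T ^^ (r k)) x0) \<longlonglongrightarrow> xs"
  shows "T xs = xs \<and> finite {x. T x = x} \<and> card {x. T x = x} \<le> 2"
proof -
  have E: "dist (T x) (T y) + dist (T y) (T z) + dist (T x) (T z)
        \<le> alpha * (dist x y + dist y z + dist z x) + lam * (dist x (T x) + dist y (T y) + dist z (T z))"
    if "x \<noteq> y" "y \<noteq> z" "x \<noteq> z" for x y z
    by (rule ext_ineq[OF cont dense]) (fact contr that)+
  define x where "x n = (T ^^ n) x0" for n
  have xS: "x (Suc n) = T (x n)" for n by (simp add: x_def)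
  have ic: "\<And>w. isCont T w" using cont by (simp add: continuous_on_eq_continuous_at)
  have fix1: "T xs = xs"
  proof (cases "\<exists>n. T (x n) = x n")
    case True
    then obtain n where n: "T (x n) = x n" by blast
    have const: "x m = x n" if "m \<ge> n" for m
      using that
    proof (induction m rule: dec_induct)
      case base then show ?case by simp
    next
      case (step m) then show ?case by (simp add: xS n)
    qed
    have "eventually (\<lambda>k. x (r k) = x n) sequentially"
      using eventually_ge_at_top[of n]
    proof eventually_elim
      case (elim k)
      have "n \<le> r k" using seq_suble[OF subseq, of k] elim by linarith
      then show ?case by (rule const)
    qed
    then have "(\<lambda>k. x (r k)) \<longlonglongrightarrow> x n"
      by (simp add: tendsto_eventually)
    moreover have "(\<lambda>k. x (r k)) \<longlonglongrightarrow> xs" using conv by (simp add: x_def)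
    ultimately have "xs = x n" using LIMSEQ_unique by blast
    then show ?thesis using n by simp
  next
    case False
    have d1: "x n \<noteq> x (Suc n)" for n using False xS[of n] by metis
    have d2: "x n \<noteq> x (Suc (Suc n))" for n using no_per2[of "x n"] False xS[of n] xS[of "Suc n"] by metis
    define P where "P n = dist (x n) (x (Suc n)) + dist (x (Suc n)) (x (Suc (Suc n))) + dist (x n) (x (Suc (Suc n)))" for n
    define q where "q = (alpha + lam) / (1 - lam / 2)"
    have lpos: "1 - lam / 2 > 0" using coef alpha_nonneg by linarith
    have q0: "q \<ge> 0" unfolding q_def using lpos alpha_nonneg lambda_nonneg by simp
    have q1: "q < 1" unfolding q_def using lpos coef alpha_nonneg by (simp add: field_simps)
    have step: "P (Suc n) \<le> q * P n" for n
    proof -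
      define A where "A = dist (x n) (x (Suc n))"
      define B where "B = dist (x (Suc n)) (x (Suc (Suc n)))"
      define C where "C = dist (x n) (x (Suc (Suc n)))"
      define D where "D = dist (x (Suc (Suc n))) (x (Suc (Suc (Suc n))))"
      define F where "F = dist (x (Suc n)) (x (Suc (Suc (Suc n))))"
      have Pn: "P n = A + B + C" unfolding P_def A_def B_def C_def by simp
      have PS: "P (Suc n) = B + D + F" unfolding P_def B_def D_def F_def by simp
      note i0 = E[OF d1[of n] d1[of "Suc n"] d2[of n]]
      have i: "B + D + F \<le> alpha * (A + B + C) + lam * (A + B + D)"
        using i0 unfolding A_def B_def C_def D_def F_def
        by (simp only: xS[symmetric] dist_commute[of "x (Suc (Suc n))" "x n"])
      have t1: "D \<le> B + F"
        unfolding B_def D_def F_def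
        using dist_triangle[of "x (Suc (Suc n))" "x (Suc (Suc (Suc n)))" "x (Suc n)"]
        by (simp add: dist_commute)
      have C0: "C \<ge> 0" unfolding C_def by simp
      have "A + B + D \<le> (A + B + C) + (B + D + F) / 2" using t1 C0 by (simp add: field_simps)
      then have "lam * (A + B + D) \<le> lam * ((A + B + C) + (B + D + F) / 2)"
        using lambda_nonneg by (rule mult_left_mono)
      then have "(B + D + F) \<le> alpha * (A + B + C) + lam * (A + B + C) + lam * (B + D + F) / 2"
        using i by (simp add: algebra_simps)
      then have "(1 - lam/2) * (B + D + F) \<le> (alpha + lam) * (A + B + C)"
        by (simp add: algebra_simps)
      then have "(B + D + F) \<le> q * (A + B + C)" unfolding q_def using lpos by (simp add: field_simps)
      then show ?thesis using Pn PS by simp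
    qed
    have Pb: "P n \<le> q ^ n * P 0" for n
    proof (induction n)
      case 0 then show ?case by simp
    next
      case (Suc n)
      have "P (Suc n) \<le> q * P n" by (rule step)
      also have "\<dots> \<le> q * (q ^ n * P 0)" by (rule mult_left_mono[OF Suc.IH q0])
      finally show ?case by simp
    qed
    have g0: "(\<lambda>n. q ^ n * P 0) \<longlonglongrightarrow> 0"
      using tendsto_mult[OF LIMSEQ_power_zero[of q] tendsto_const[of "P 0"]] q0 q1 by simp
    have gb: "dist (x n) (x (Suc n)) \<le> q ^ n * P 0" for n
      using Pb[of n] zero_le_dist[of "x (Suc n)" "x (Suc (Suc n))"] zero_le_dist[of "x n" "x (Suc (Suc n))"]
      unfolding P_def by linarith
    have dz: "(\<lambda>n. dist (x n) (x (Suc n))) \<longlonglongrightarrow> 0"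
      by (rule Lim_null_comparison[OF _ g0]) (simp add: gb)
    have dzr: "(\<lambda>k. dist (x (r k)) (x (Suc (r k)))) \<longlonglongrightarrow> 0"
      using LIMSEQ_subseq_LIMSEQ[OF dz subseq] by (simp add: o_def)
    have xr: "(\<lambda>k. x (r k)) \<longlonglongrightarrow> xs" using conv by (simp add: x_def)
    have Txr: "(\<lambda>k. T (x (r k))) \<longlonglongrightarrow> T xs" using xr ic isCont_tendsto_compose by blast
    have "(\<lambda>k. dist (x (r k)) (x (Suc (r k)))) \<longlonglongrightarrow> dist xs (T xs)"
      unfolding xS by (intro tendsto_dist xr Txr)
    then have "dist xs (T xs) = 0" using dzr LIMSEQ_unique by blast
    then show ?thesis by simp
  qed
  have no3: False if "T a = a" "T b = b" "T c = c" "a \<noteq> b" "b \<noteq> c" "a \<noteq> c" for a b c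
  proof -
    have h: "dist a b + dist b c + dist a c \<le> alpha * (dist a b + dist b c + dist a c)"
      using E[OF that(4-6)] that(1-3) by (simp add: dist_commute)
    have p: "dist a b + dist b c + dist a c > 0" using that
      by (simp add: add_pos_nonneg)
    have "alpha < 1" using coef lambda_nonneg by linarith
    then have "(1 - alpha) * (dist a b + dist b c + dist a c) > 0" using p by simp
    then show False using h by (simp add: algebra_simps)
  qed
  have fin: "finite {x. T x = x} \<and> card {x. T x = x} \<le> 2"
  proof (rule ccontr)
    assume nt: "\<not> ?thesis"
    have "\<exists>B. finite B \<and> card B = 3 \<and> B \<subseteq> {x. T x = x}"
    proof (cases "finite {x. T x = x}")
      case True
      with nt have "3 \<le> card {x. T x = x}" by simp
      then obtain B where "B \<subseteq> {x. T x = x}" "card B = 3" by (rule obtain_subset_with_card_n)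
      then show ?thesis using True finite_subset by blast
    next
      case False
      then show ?thesis using infinite_arbitrarily_large by blast
    qed
    then obtain B where B: "finite B" "card B = 3" "B \<subseteq> {x. T x = x}" by blast
    then obtain a b c where "B = {a,b,c}" "a \<noteq> b" "b \<noteq> c" "a \<noteq> c"
      using card_3_iff by metis
    then show False using no3 B(3) by auto
  qed
  show ?thesis using fix1 fin by blast
qed

end
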